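(* Let $\mathbb{F}_q$ be any finite field. Every element of $\operatorname{Mat}_2(\mathbb{F}_q)$ can be written as a sum of two matrices in $\operatorname{SL}_2(\mathbb{F}_q)$.
   Context: $\operatorname{SL}_2(\mathbb{F}_q)$ is the set of $2\times 2$ matrices over $\mathbb{F}_q$ of determinant $1$. *)

theory Defs
  imports "HOL-Analysis.Analysis"
begin

definition SL2 :: "(('a::comm_ring_1)^2^2) set" where
  "SL2 = {A. det A = 1}"

end

theory Submission
  imports Defs
begin

lemma key:
  fixes M :: "('a::field)^2^2"
  shows "\<exists>A. det A = 1 \<and> det (M - A) = 1"
proof -
  define a where "a = M$1$1"
  define b where "b = M$1$2"
  define c where "c = M$2$1"
  define d where "d = M$2$2"
  have dM: "\<And>A::'a^2^2. det (M - A) = (a - A$1$1) * (d - A$2$2) - (b - A$1$2) * (c - A$2$1)"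
    by (simp add: det_2 a_def b_def c_def d_def)
  show ?thesis
  proof (cases "a \<noteq> 0")
    case True
    define s where "s = d - (1 + (b - 1) * (c + 1)) / a"
    let ?A = "vector [vector [0, 1], vector [-1, s]] :: 'a^2^2"
    have "det ?A = 1" by (simp add: det_2)
    moreover have "det (M - ?A) = 1" unfolding dM using True
      by (simp add: s_def field_simps)
    ultimately show ?thesis by blast
  next
    case a0: False
    show ?thesis
    proof (cases "d \<noteq> 0")
      case True
      define p where "p = a - (1 + (b - 1) * (c + 1)) / d"
      let ?A = "vector [vector [p, 1], vector [-1, 0]] :: 'a^2^2"
      have "det ?A = 1" by (simp add: det_2)
      moreover have "det (M - ?A) = 1" unfolding dM using True
        by (simp add: p_def field_simps)
      ultimately show ?thesis by blast
    next
      case False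
      let ?A = "vector [vector [1, 0], vector [c, 1]] :: 'a^2^2"
      have "det ?A = 1" by (simp add: det_2)
      moreover have "det (M - ?A) = 1" unfolding dM using False a0
        by simp
      ultimately show ?thesis by blast
    qed
  qed
qed

theorem proposition3p9:
  fixes M :: "('a::{field,finite})^2^2"
  shows "\<exists>A B. A \<in> SL2 \<and> B \<in> SL2 \<and> M = A + B"
proof -
  obtain A where "det A = 1" "det (M - A) = 1" using key by blast
  then show ?thesis unfolding SL2_def by (intro exI[of _ A] exI[of _ "M - A"]) auto
qed

end
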